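(* Assume the input embeddings $e_1,\dots,e_N$ are orthonormal and the output embeddings $u_1,\dots,u_M$ are orthonormal. Let $W_t$ solve the gradient flow $\dot W_t=-\nabla\mathcal{L}(W_t)$ from an arbitrary $W_0$, and write $w_i(t)=u_i^\top W_t e_x$ for a fixed $x\in[N]$. Then for all $i,j\in[M]\setminus\{f^*(x)\}$ the quantity $\exp(-w_i(t))-\exp(-w_j(t))$ is constant in $t$, and $\sum_{i\in[M]}w_i(t)$ is constant in $t$.
   Context: Integers $N,M\ge2$, $d\ge\max(N,M)$. Fixed embeddings $e_1,\dots,e_N,u_1,\dots,u_M\in\mathbb{R}^d$, target $f^*:[N]\to[M]$, probability distribution $p$ on $[N]$. For $W\in\mathbb{R}^{d\times d}$: $p_W(y\mid x)=\exp(u_y^\top We_x)/\sum_{z\in[M]}\exp(u_z^\top We_x)$, $\mathcal{L}(W)=-\sum_x p(x)\log p_W(f^*(x)\mid x)$. Gradients are for the Frobenius inner product. *)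

theory Defs
  imports "HOL-Analysis.Analysis"
begin

text \<open>Indices: [N] is rendered as {0..<N}, [M] as {0..<M}. Embeddings live in real^'d,
  W is a d x d matrix real^'d^'d; the inner product on real^'d^'d is the Frobenius inner product.\<close>

definition logit :: "(nat \<Rightarrow> real^'d) \<Rightarrow> (nat \<Rightarrow> real^'d) \<Rightarrow> real^'d^'d \<Rightarrow> nat \<Rightarrow> nat \<Rightarrow> real" where
  "logit e u W y x = u y \<bullet> (W *v e x)"

definition pW :: "nat \<Rightarrow> (nat \<Rightarrow> real^'d) \<Rightarrow> (nat \<Rightarrow> real^'d) \<Rightarrow> real^'d^'d \<Rightarrow> nat \<Rightarrow> nat \<Rightarrow> real" where
  "pW M e u W y x = exp (logit e u W y x) / (\<Sum>z<M. exp (logit e u W z x))"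

definition loss :: "nat \<Rightarrow> nat \<Rightarrow> (nat \<Rightarrow> real^'d) \<Rightarrow> (nat \<Rightarrow> real^'d) \<Rightarrow> (nat \<Rightarrow> nat)
    \<Rightarrow> (nat \<Rightarrow> real) \<Rightarrow> real^'d^'d \<Rightarrow> real" where
  "loss N M e u fstar p W = - (\<Sum>x<N. p x * ln (pW M e u W (fstar x) x))"

end

theory Submission imports Defs begin

lemma logit_deriv: fixes e u :: "nat \<Rightarrow> real^'d" shows "((\<lambda>W. logit e u W y x) has_derivative (\<lambda>h. u y \<bullet> (h *v e x))) F"
proof -
  have "bounded_linear (\<lambda>h::real^'d^'d. u y \<bullet> (h *v e x))"
    by (intro bounded_linear_compose[OF bounded_linear_inner_right] bounded_linearI')
       (auto simp: matrix_vector_mult_def vec_eq_iff algebra_simps sum.distrib sum_distrib_left)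
  then show ?thesis unfolding logit_def by (rule bounded_linear.has_derivative) (rule has_derivative_ident)
qed

lemma loss_eq:
  assumes "M > 0"
  shows "loss N M e u fstar p = (\<lambda>W. - (\<Sum>x<N. p x * (logit e u W (fstar x) x - ln (\<Sum>z<M. exp (logit e u W z x)))))"
proof
  fix W
  have pos: "(\<Sum>z<M. exp (logit e u W z x)) > 0" for x
    using assms by (intro sum_pos) auto
  then have pos': "(\<Sum>z<M. exp (logit e u W z x)) \<noteq> 0" for x by (metis less_irrefl)
  show "loss N M e u fstar p W = - (\<Sum>x<N. p x * (logit e u W (fstar x) x - ln (\<Sum>z<M. exp (logit e u W z x))))"
    unfolding loss_def pW_def using pos' by (simp add: ln_div)
qed

lemma loss_deriv:
  assumes "M > 0"
  shows "(loss N M e u fstar p has_derivative (\<lambda>h. - (\<Sum>x<N. p x * (u (fstar x) \<bullet> (h *v e x)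
     - (\<Sum>z<M. exp (logit e u W z x) * (u z \<bullet> (h *v e x))) / (\<Sum>z<M. exp (logit e u W z x)))))) (at W)"
proof -
  have pos: "(\<Sum>z<M. exp (logit e u W z x)) > 0" for x
    using assms by (intro sum_pos) auto
  have L: "((\<lambda>W. ln (\<Sum>z<M. exp (logit e u W z x))) has_derivative
          (\<lambda>h. (\<Sum>z<M. exp (logit e u W z x) * (u z \<bullet> (h *v e x))) /
                (\<Sum>z<M. exp (logit e u W z x)))) (at W)" for x
    apply (rule has_derivative_eq_rhs)
     apply (rule has_derivative_ln)
      apply (simp add: pos)
     apply (rule has_derivative_sum, rule has_derivative_exp, rule logit_deriv)
    apply (simp add: sum_divide_distrib divide_inverse mult.commute)
    done
  show ?thesis unfolding loss_eq[OF assms]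
    by (intro has_derivative_minus has_derivative_sum has_derivative_mult_right has_derivative_diff logit_deriv L)
qed
lemma grad_comp:
  fixes e u :: "nat \<Rightarrow> real^'d" and G W :: "real^'d^'d"
  assumes M: "M > 0" and g: "GDERIV (loss N M e u fstar p) W :> G"
    and eo: "\<forall>a<N. \<forall>b<N. e a \<bullet> e b = (if a = b then 1 else 0)"
    and uo: "\<forall>a<M. \<forall>b<M. u a \<bullet> u b = (if a = b then 1 else 0)"
    and fs: "\<forall>y<N. fstar y < M" and x: "x < N" and i: "i < M"
  shows "u i \<bullet> (G *v e x) = - (p x * ((if i = fstar x then 1 else 0)
            - exp (logit e u W i x) / (\<Sum>z<M. exp (logit e u W z x))))"
proof -
  define h :: "real^'d^'d" where "h = (\<chi> a b. u i $ a * e x $ b)"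
  have eq: "(\<lambda>h. h \<bullet> G) = (\<lambda>h. - (\<Sum>x<N. p x * (u (fstar x) \<bullet> (h *v e x)
     - (\<Sum>z<M. exp (logit e u W z x) * (u z \<bullet> (h *v e x))) / (\<Sum>z<M. exp (logit e u W z x)))))"
    by (rule has_derivative_unique[OF g[unfolded gderiv_def] loss_deriv[OF M]])
  have hG: "h \<bullet> G = u i \<bullet> (G *v e x)"
    by (simp add: h_def inner_vec_def matrix_vector_mult_def sum_distrib_left algebra_simps)
  have hv: "h *v v = (e x \<bullet> v) *\<^sub>R u i" for v
    by (simp add: h_def vec_eq_iff inner_vec_def matrix_vector_mult_def sum_distrib_left algebra_simps)
  have trm: "p y * (u (fstar y) \<bullet> (h *v e y)
     - (\<Sum>z<M. exp (logit e u W z y) * (u z \<bullet> (h *v e y))) / (\<Sum>z<M. exp (logit e u W z y)))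
     = (if y = x then p x * ((if i = fstar x then 1 else 0)
            - exp (logit e u W i x) / (\<Sum>z<M. exp (logit e u W z x))) else 0)" if y: "y < N" for y
  proof (cases "y = x")
    case True
    have s: "(\<Sum>z<M. exp (logit e u W z x) * (u z \<bullet> u i)) = exp (logit e u W i x)"
    proof -
      have "(\<Sum>z<M. exp (logit e u W z x) * (u z \<bullet> u i)) = (\<Sum>z<M. if z = i then exp (logit e u W z x) else 0)"
        using uo i by (intro sum.cong) auto
      also have "\<dots> = exp (logit e u W i x)" using i by (simp add: sum.delta)
      finally show ?thesis .
    qed
    show ?thesis using True hv eo x uo fs i s by (auto simp: inner_commute)
  next
    case False
    then show ?thesis using hv eo x y by simp
  qed
  have "h \<bullet> G = - (\<Sum>y<N. (if y = x then p x * ((if i = fstar x then 1 else 0)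
            - exp (logit e u W i x) / (\<Sum>z<M. exp (logit e u W z x))) else 0))"
    using fun_cong[OF eq, of h] trm by simp
  also have "\<dots> = - (p x * ((if i = fstar x then 1 else 0)
            - exp (logit e u W i x) / (\<Sum>z<M. exp (logit e u W z x))))"
    using x by (simp add: sum.delta)
  finally show ?thesis using hG by simp
qed
theorem mainTheorem4:
  fixes N M :: nat
    and e u :: "nat \<Rightarrow> real^'d"
    and fstar :: "nat \<Rightarrow> nat"
    and p :: "nat \<Rightarrow> real"
    and W :: "real \<Rightarrow> real^'d^'d"
    and x :: nat
  assumes "N \<ge> 2" and "M \<ge> 2"
    and "CARD('d) \<ge> max N M"
    and "\<forall>y<N. fstar y < M"
    and "\<forall>y<N. p y \<ge> 0" and "(\<Sum>y<N. p y) = 1"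
    and "\<forall>a<N. \<forall>b<N. e a \<bullet> e b = (if a = b then 1 else 0)"
    and "\<forall>a<M. \<forall>b<M. u a \<bullet> u b = (if a = b then 1 else 0)"
    and "\<forall>t\<ge>0. \<exists>G. GDERIV (loss N M e u fstar p) (W t) :> G
                  \<and> (W has_vector_derivative - G) (at t within {0..})"
    and "x < N"
  shows "(\<forall>i<M. \<forall>j<M. i \<noteq> fstar x \<longrightarrow> j \<noteq> fstar x \<longrightarrow>
            (\<forall>s\<ge>0. \<forall>t\<ge>0.
               exp (- (u i \<bullet> (W t *v e x))) - exp (- (u j \<bullet> (W t *v e x)))
             = exp (- (u i \<bullet> (W s *v e x))) - exp (- (u j \<bullet> (W s *v e x)))))
       \<and> (\<forall>s\<ge>0. \<forall>t\<ge>0. (\<Sum>i<M. u i \<bullet> (W t *v e x)) = (\<Sum>i<M. u i \<bullet> (W s *v e x)))"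
proof -
  note A = assms
  have M: "M > 0" using assms(2) by simp
  define w where "w i t = logit e u (W t) i x" for i t
  define Z where "Z t = (\<Sum>z<M. exp (w z t))" for t
  define D where "D i t = p x * ((if i = fstar x then 1 else 0) - exp (w i t) / Z t)" for i t
  have Zpos: "Z t > 0" for t unfolding Z_def using M by (intro sum_pos) auto
  have wd: "((\<lambda>t. w i t) has_real_derivative D i t) (at t within {0..})" if t: "t \<ge> 0" and i: "i < M" for i t
  proof -
    obtain G where G: "GDERIV (loss N M e u fstar p) (W t) :> G"
      and Wd: "(W has_vector_derivative - G) (at t within {0..})" using A(9) t by blast
    have c: "u i \<bullet> (G *v e x) = - D i t"
      using grad_comp[OF M G A(7) A(8) A(4) A(10) i] unfolding D_def w_def Z_def by simp
    have "((\<lambda>t. logit e u (W t) i x) has_derivative (\<lambda>h. u i \<bullet> ((h *\<^sub>R - G) *v e x))) (at t within {0..})"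
      using has_derivative_in_compose[OF Wd[unfolded has_vector_derivative_def] logit_deriv] by (simp add: o_def)
    moreover have "(\<lambda>h. u i \<bullet> ((h *\<^sub>R - G) *v e x)) = (*) (D i t)"
    proof
      fix h :: real
      have "(h *\<^sub>R - G) *v e x = (- h) *\<^sub>R (G *v e x)"
        using scaleR_matrix_vector_assoc[of "-h" G "e x"] by simp
      then show "u i \<bullet> ((h *\<^sub>R - G) *v e x) = D i t * h" using c by simp
    qed
    ultimately show ?thesis unfolding has_field_derivative_def w_def by simp
  qed
  have part1: "exp (- w i t) - exp (- w j t) = exp (- w i s) - exp (- w j s)"
    if i: "i < M" and j: "j < M" and "i \<noteq> fstar x" "j \<noteq> fstar x" and s: "s \<ge> 0" and t: "t \<ge> 0" for i j s t
  proof -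
    have "\<exists>c. \<forall>t\<in>{0..}. exp (- w i t) - exp (- w j t) = (c::real)"
    proof (rule has_field_derivative_zero_constant)
      fix t :: real assume "t \<in> {0..}"
      then have t: "t \<ge> 0" by simp
      have "((\<lambda>t. exp (- w i t) - exp (- w j t)) has_real_derivative
             exp (- w i t) * (- D i t) - exp (- w j t) * (- D j t)) (at t within {0..})"
        by (intro derivative_intros wd t i j)
      moreover have "exp (- w i t) * (- D i t) - exp (- w j t) * (- D j t) = 0"
        using that(3,4) Zpos[of t] by (simp add: D_def algebra_simps exp_minus)
      ultimately show "((\<lambda>t. exp (- w i t) - exp (- w j t)) has_real_derivative 0) (at t within {0..})" by simp
    qed simp
    then show ?thesis using s t by force
  qed
  have part2: "(\<Sum>i<M. w i t) = (\<Sum>i<M. w i s)" if s: "s \<ge> 0" and t: "t \<ge> 0" for s t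
  proof -
    have "\<exists>c. \<forall>t\<in>{0..}. (\<Sum>i<M. w i t) = (c::real)"
    proof (rule has_field_derivative_zero_constant)
      fix t :: real assume "t \<in> {0..}"
      then have t: "t \<ge> 0" by simp
      have "((\<lambda>t. \<Sum>i<M. w i t) has_real_derivative (\<Sum>i<M. D i t)) (at t within {0..})"
        by (intro DERIV_sum wd t) simp
      moreover have "(\<Sum>i<M. D i t) = 0"
      proof -
        have "(\<Sum>i<M. D i t) = p x * ((\<Sum>i<M. if i = fstar x then 1 else 0) - (\<Sum>i<M. exp (w i t)) / Z t)"
          unfolding D_def sum_distrib_left[symmetric] sum_subtractf sum_divide_distrib by simp
        also have "\<dots> = 0" using Zpos[of t] A(4) A(10) by (simp add: Z_def)
        finally show ?thesis .
      qed
      ultimately show "((\<lambda>t. \<Sum>i<M. w i t) has_real_derivative 0) (at t within {0..})" by simp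
    qed simp
    then show ?thesis using s t by force
  qed
  show ?thesis using part1 part2 unfolding w_def logit_def by blast
qed

end
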